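(* Suppose Assumptions 1–4 hold and $p$ is convex. Let $\mathbf{x}$ be a Cournot candidate and $\mathbf{x}^S$ a social optimum. (a) If $p(X)=p(X^S)$, then $\gamma(\mathbf{x})=1$. (b) If $p(X)\neq p(X^S)$, let $c=|p'(X)|$, $d=\left|\dfrac{p(X^S)-p(X)}{X^S-X}\right|$ and $\overline c=c/d$. Then $\overline c\ge1$ and $$1>\gamma(\mathbf{x})\ge f(\overline c):=\frac{\phi^2+2}{\phi^2+2\phi+\overline c},\qquad \phi=\max\left\{\frac{2-\overline c+\sqrt{\overline c^{\,2}-4\overline c+12}}{2},\,1\right\}.$$
   Context: Cournot model: $N$ suppliers, inverse demand $p:[0,\infty)\to[0,\infty)$, supplier $n$ has cost $C_n:[0,\infty)\to[0,\infty)$ and chooses $x_n\ge0$; $X=\sum_n x_n$, $X^S=\sum_n x_n^S$. $\partial_\pm$ denote right/left derivatives; $C_n'(0)$ is the right derivative at $0$. Assumption 1: each $C_n$ is convex, continuous, nondecreasing on $[0,\infty)$, continuously differentiable on $(0,\infty)$, with $C_n(0)=0$. Assumption 2: $p$ is continuous, nonnegative, nonincreasing, $p(0)>0$; its right derivative at $0$ exists and at every $q>0$ its left and right derivatives exist. Assumption 3: there exists $R>0$ such that $p(R)\le\min_n C_n'(0)$. Assumption 4: $p(0)>\min_n C_n'(0)$. Social welfare of $\mathbf{x}\ge0$: $W(\mathbf{x})=\int_0^X p(q)\,dq-\sum_{n=1}^N C_n(x_n)$; a social optimum $\mathbf{x}^S$ maximizes $W$. Efficiency: $\gamma(\mathbf{x})=W(\mathbf{x})/W(\mathbf{x}^S)$.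 A nonnegative vector $\mathbf{x}$ is a Cournot candidate if for every $n$: $C_n'(x_n)\le p(X)+x_n\,\partial_-p(X)$ whenever $x_n>0$, and $C_n'(x_n)\ge p(X)+x_n\,\partial_+p(X)$. (For convex $p$, $p$ is differentiable at $X$ for any Cournot candidate with $X>0$.) *)

theory Defs
  imports "HOL-Analysis.Analysis"
begin

text \<open>Suppliers are indexed by n < N; a production profile is a function
  x :: nat => real, of which only the components n < N matter.\<close>

definition total :: "nat \<Rightarrow> (nat \<Rightarrow> real) \<Rightarrow> real" where
  "total N x = (\<Sum>n<N. x n)"

definition nonneg_profile :: "nat \<Rightarrow> (nat \<Rightarrow> real) \<Rightarrow> bool" where
  "nonneg_profile N x \<longleftrightarrow> (\<forall>n<N. 0 \<le> x n)"

definition welfare :: "nat \<Rightarrow> (real \<Rightarrow> real) \<Rightarrow> (nat \<Rightarrow> real \<Rightarrow> real) \<Rightarrow> (nat \<Rightarrow> real) \<Rightarrow> real" where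
  "welfare N p C x = integral {0..total N x} p - (\<Sum>n<N. C n (x n))"

definition social_optimum :: "nat \<Rightarrow> (real \<Rightarrow> real) \<Rightarrow> (nat \<Rightarrow> real \<Rightarrow> real) \<Rightarrow> (nat \<Rightarrow> real) \<Rightarrow> bool" where
  "social_optimum N p C xS \<longleftrightarrow> nonneg_profile N xS \<and>
     (\<forall>y. nonneg_profile N y \<longrightarrow> welfare N p C y \<le> welfare N p C xS)"

definition efficiency :: "nat \<Rightarrow> (real \<Rightarrow> real) \<Rightarrow> (nat \<Rightarrow> real \<Rightarrow> real) \<Rightarrow> (nat \<Rightarrow> real) \<Rightarrow> (nat \<Rightarrow> real) \<Rightarrow> real" where
  "efficiency N p C xS x = welfare N p C x / welfare N p C xS"

text \<open>Cournot candidate. dC n is the derivative of C n (right derivative at 0),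
  pL / pR are the left / right derivatives of p.\<close>
definition cournot_candidate ::
  "nat \<Rightarrow> (nat \<Rightarrow> real \<Rightarrow> real) \<Rightarrow> (real \<Rightarrow> real) \<Rightarrow> (real \<Rightarrow> real) \<Rightarrow> (real \<Rightarrow> real) \<Rightarrow> (nat \<Rightarrow> real) \<Rightarrow> bool" where
  "cournot_candidate N dC p pL pR x \<longleftrightarrow> nonneg_profile N x \<and>
     (\<forall>n<N. (0 < x n \<longrightarrow> dC n (x n) \<le> p (total N x) + x n * pL (total N x)) \<and>
            dC n (x n) \<ge> p (total N x) + x n * pR (total N x))"

definition phi_bound :: "real \<Rightarrow> real" where
  "phi_bound cb = max ((2 - cb + sqrt (cb\<^sup>2 - 4 * cb + 12)) / 2) 1"

definition f_bound :: "real \<Rightarrow> real" where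
  "f_bound cb = ((phi_bound cb)\<^sup>2 + 2) / ((phi_bound cb)\<^sup>2 + 2 * phi_bound cb + cb)"

end

theory Submission imports Defs begin

lemma slope_sw: "((u::real) - v) / (s - t) = (v - u) / (t - s)"
  by (metis minus_diff_eq minus_divide_divide)

lemma slope_mono:
  fixes f :: "real \<Rightarrow> real"
  assumes f: "convex_on {0..} f" and h: "0 \<le> a" "a < b" "a \<le> a'" "a' < b'" "b \<le> b'"
  shows "(f b - f a)/(b - a) \<le> (f b' - f a')/(b' - a')"
proof -
  have 1: "(f b - f a)/(b - a) \<le> (f b' - f a)/(b' - a)"
  proof (cases "b = b'")
    case False
    then have "b < b'" using h by simp
    from convex_on_slope_le(1)[OF f _ _ h(2) this] h show ?thesis
      by (simp add: slope_sw)
  qed simp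
  have 2: "(f b' - f a)/(b' - a) \<le> (f b' - f a')/(b' - a')"
  proof (cases "a = a'")
    case False
    then have "a < a'" using h by simp
    from convex_on_slope_le(2)[OF f _ _ this h(4)] h show ?thesis
      by (simp add: slope_sw)
  qed simp
  from 1 2 show ?thesis by linarith
qed

lemma tangent_right:
  fixes f :: "real \<Rightarrow> real"
  assumes f: "convex_on {0..} f" and c: "0 \<le> c" and x: "0 \<le> x"
    and D: "(f has_real_derivative D) (at c within {c..})"
  shows "D * (x - c) \<le> f x - f c"
proof -
  have lim: "((\<lambda>y. (f y - f c)/(y - c)) \<longlongrightarrow> D) (at_right c)"
    using D unfolding has_field_derivative_iff
    by (rule tendsto_mono[rotated]) (intro at_le, auto)
  consider "c < x" | "x < c" | "x = c" by linarith
  then show ?thesis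
  proof cases
    case 1
    have "eventually (\<lambda>y. (f y - f c)/(y - c) \<le> (f x - f c)/(x - c)) (at_right c)"
      using eventually_at_right_real[OF 1]
    proof eventually_elim
      case (elim y) then show ?case using slope_mono[OF f c, of y c x] by auto
    qed
    from tendsto_upperbound[OF lim this] have "D \<le> (f x - f c)/(x - c)" by simp
    with 1 show ?thesis by (simp add: field_simps)
  next
    case 2
    have "eventually (\<lambda>y. (f c - f x)/(c - x) \<le> (f y - f c)/(y - c)) (at_right c)"
      using eventually_at_right_real[of c "c+1", OF less_add_one]
    proof eventually_elim
      case (elim y) then show ?case using slope_mono[OF f x 2, of c y] \<open>x < c\<close> by auto
    qed
    from tendsto_lowerbound[OF lim this] have "(f c - f x)/(c - x) \<le> D" by simp
    with 2 show ?thesis by (simp add: field_simps)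
  qed simp
qed

lemma tangent_left:
  fixes f :: "real \<Rightarrow> real"
  assumes f: "convex_on {0..} f" and c: "0 < c" and x: "0 \<le> x"
    and D: "(f has_real_derivative D) (at c within {..c})"
  shows "D * (x - c) \<le> f x - f c"
proof -
  have lim: "((\<lambda>y. (f y - f c)/(y - c)) \<longlongrightarrow> D) (at_left c)"
    using D unfolding has_field_derivative_iff
    by (rule tendsto_mono[rotated]) (intro at_le, auto)
  consider "c < x" | "x < c" | "x = c" by linarith
  then show ?thesis
  proof cases
    case 1
    have "eventually (\<lambda>y. (f y - f c)/(y - c) \<le> (f x - f c)/(x - c)) (at_left c)"
      using eventually_at_left_real[of "c/2" c] c
    proof -
      have "c/2 < c" using c by simp
      from eventually_at_left_real[OF this] show ?thesis
    proof (eventually_elim)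
      case (elim y) then show ?case using slope_mono[OF f, of y c c x] c 1
        by (auto simp: slope_sw)
    qed
    qed
    from tendsto_upperbound[OF lim this] have "D \<le> (f x - f c)/(x - c)" by simp
    with 1 show ?thesis by (simp add: field_simps)
  next
    case 2
    have "eventually (\<lambda>y. (f c - f x)/(c - x) \<le> (f y - f c)/(y - c)) (at_left c)"
      using eventually_at_left_real[OF 2]
    proof eventually_elim
      case (elim y) then show ?case using slope_mono[OF f x 2, of y c] by (auto simp: slope_sw)
    qed
    from tendsto_lowerbound[OF lim this] have "(f c - f x)/(c - x) \<le> D" by simp
    with 2 show ?thesis by (simp add: field_simps)
  qed simp
qed

lemma pos_right:
  fixes h :: "real \<Rightarrow> real"
  assumes d: "(h has_real_derivative l) (at 0 within {0..1})" and l: "0 < l"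
  shows "\<exists>t>0. h 0 < h t"
proof -
  have "((\<lambda>y. (h y - h 0)/(y - 0)) \<longlongrightarrow> l) (at 0 within {0..1})"
    using d by (simp add: has_field_derivative_iff)
  from order_tendstoD(1)[OF this l]
  have "eventually (\<lambda>y. 0 < (h y - h 0)/(y - 0)) (at 0 within {0..1})" .
  then obtain e where e: "e > 0" and H: "\<And>y. y \<in> {0..1} \<Longrightarrow> y \<noteq> 0 \<Longrightarrow> dist y 0 < e \<Longrightarrow> 0 < (h y - h 0)/(y - 0)"
    unfolding eventually_at by blast
  define t where "t = min (e/2) 1"
  have t: "t > 0" "t \<in> {0..1}" "dist t 0 < e" using e by (auto simp: t_def dist_real_def)
  from H[OF t(2) _ t(3)] t(1) have "0 < (h t - h 0)/t" by simp
  with t(1) have "h 0 < h t" by (simp add: zero_less_divide_iff)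
  with t(1) show ?thesis by blast
qed

lemma perturb:
  fixes p Cn :: "real \<Rightarrow> real"
  assumes pc: "continuous_on {0..} p" and T: "0 \<le> T" and y: "0 \<le> y"
    and Cd: "(Cn has_real_derivative a) (at y within {y..})" and lt: "a < p T"
  shows "\<exists>t>0. integral {0..T} p - Cn y < integral {0..T+t} p - Cn (y+t)"
proof -
  have i0: "((\<lambda>s. integral {0..s} p) has_real_derivative p T) (at T within ((\<lambda>t. T + t) ` {0..1}))"
    apply (rule DERIV_subset[OF integral_has_real_derivative[of 0 "T+1" p T]])
    using T by (auto intro: continuous_on_subset[OF pc])
  then have i: "((\<lambda>s. integral {0..s} p) has_real_derivative p T) (at ((\<lambda>t. T + t) 0) within ((\<lambda>t. T + t) ` {0..1}))"
    by simp
  have g: "((\<lambda>t. T + t) has_real_derivative 1) (at 0 within {0..1})"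
    by (auto intro!: derivative_eq_intros)
  from DERIV_image_chain[OF i g] have d1: "((\<lambda>t. integral {0..T+t} p) has_real_derivative p T) (at 0 within {0..1})"
    by (simp add: o_def)
  have i20: "(Cn has_real_derivative a) (at y within ((\<lambda>t. y + t) ` {0..1}))"
    by (rule DERIV_subset[OF Cd]) auto
  then have i2: "(Cn has_real_derivative a) (at ((\<lambda>t. y + t) 0) within ((\<lambda>t. y + t) ` {0..1}))"
    by simp
  have g2: "((\<lambda>t. y + t) has_real_derivative 1) (at 0 within {0..1})"
    by (auto intro!: derivative_eq_intros)
  from DERIV_image_chain[OF i2 g2] have d2: "((\<lambda>t. Cn (y+t)) has_real_derivative a) (at 0 within {0..1})"
    by (simp add: o_def)
  from pos_right[OF DERIV_diff[OF d1 d2]] lt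
  obtain t where "t > 0" "integral {0..T+0} p - Cn (y+0) < integral {0..T+t} p - Cn (y+t)"
    by auto
  then show ?thesis by auto
qed

lemma sum_upd:
  fixes g :: "nat \<Rightarrow> real \<Rightarrow> real"
  assumes "n < N"
  shows "(\<Sum>k<N. g k ((x(n:=v)) k)) = (\<Sum>k<N. g k (x k)) - g n (x n) + g n v"
proof -
  have f: "finite {..<N}" "n \<in> {..<N}" using assms by auto
  have "(\<Sum>k<N. g k ((x(n:=v)) k)) = g n v + (\<Sum>k\<in>{..<N}-{n}. g k ((x(n:=v)) k))"
    using sum.remove[OF f, of "\<lambda>k. g k ((x(n:=v)) k)"] by simp
  also have "(\<Sum>k\<in>{..<N}-{n}. g k ((x(n:=v)) k)) = (\<Sum>k\<in>{..<N}-{n}. g k (x k))"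
    by (rule sum.cong) auto
  also have "\<dots> = (\<Sum>k<N. g k (x k)) - g n (x n)"
    using sum.remove[OF f, of "\<lambda>k. g k (x k)"] by simp
  finally show ?thesis by simp
qed

lemma welfare_upd:
  assumes "n < N"
  shows "welfare N p C (x(n := x n + t)) = welfare N p C x +
     ((integral {0..total N x + t} p - C n (x n + t)) - (integral {0..total N x} p - C n (x n)))"
proof -
  have "total N (x(n := x n + t)) = total N x + t"
    unfolding total_def using sum_upd[OF assms, of "\<lambda>k u. u" x "x n + t"] by simp
  then show ?thesis unfolding welfare_def using sum_upd[OF assms, of C x "x n + t"] by simp
qed

lemma lin_integral:
  fixes a b u w :: real
  assumes "a \<le> b"
  shows "integral {a..b} (\<lambda>q. u + w * q) = u * (b - a) + w * (b^2 - a^2) / 2"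
proof -
  have "((\<lambda>q. u + w * q) has_integral ((u * b + w * b^2 / 2) - (u * a + w * a^2 / 2))) {a..b}"
    apply (rule fundamental_theorem_of_calculus[OF assms])
    apply (auto intro!: derivative_eq_intros simp: has_real_derivative_iff_has_vector_derivative[symmetric])
    done
  then have "integral {a..b} (\<lambda>q. u + w * q) = (u * b + w * b^2 / 2) - (u * a + w * a^2 / 2)"
    by (rule integral_unique)
  then show ?thesis by (simp add: field_simps)
qed


lemma fb:
  fixes cb ph :: real
  assumes cb: "1 \<le> cb" and ph: "1 \<le> ph"
  shows "f_bound cb \<le> (ph^2 + 2) / (ph^2 + 2*ph + cb)"
proof -
  define s where "s = sqrt (cb^2 - 4*cb + 12)"
  define r where "r = (2 - cb + s) / 2"
  have "cb^2 - 4*cb + 12 = (cb-2)^2 + 8" by (simp add: power2_eq_square algebra_simps)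
  moreover have "0 \<le> (cb-2)^2" by simp
  ultimately have nn: "0 \<le> cb^2 - 4*cb + 12" by linarith
  have s2: "s^2 = cb^2 - 4*cb + 12" unfolding s_def using nn by simp
  have s0: "0 \<le> s" unfolding s_def using nn by simp
  have ph0: "phi_bound cb = max r 1" unfolding phi_bound_def r_def s_def by simp
  have key: "(phi_bound cb ^2 + 2) * (ph^2 + 2*ph + cb) \<le> (ph^2 + 2) * (phi_bound cb^2 + 2*phi_bound cb + cb)"
  proof (cases "1 \<le> r")
    case True
    then have e: "phi_bound cb = r" using ph0 by simp
    have sr: "s = 2*r - 2 + cb" unfolding r_def by (simp add: field_simps)
    have h0: "2*r^2 + 2*(cb-2)*r - 4 = 0"
    proof -
      have "(2*r - 2 + cb)^2 = cb^2 - 4*cb + 12" using s2 sr by simp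
      then show ?thesis by (simp add: power2_eq_square algebra_simps)
    qed
    have id: "(ph^2 + 2) * (r^2 + 2*r + cb) - (r^2 + 2) * (ph^2 + 2*ph + cb)
        = (ph - r)^2 * (cb - 2 + 2*r) + (ph - r) * (2*r^2 + 2*(cb-2)*r - 4)"
      by (simp add: power2_eq_square algebra_simps)
    have "0 \<le> (ph - r)^2 * (cb - 2 + 2*r)" using s0 sr by simp
    with id h0 e show ?thesis by simp
  next
    case False
    then have e: "phi_bound cb = 1" using ph0 by simp
    have "s < cb" using False unfolding r_def by simp
    then have "s^2 < cb^2" using s0 by (simp add: power_strict_mono)
    then have cb3: "3 < cb" using s2 by simp
    have id: "(ph^2 + 2) * (1^2 + 2*1 + cb) - (1^2 + 2) * (ph^2 + 2*ph + cb)
        = (ph - 1) * (cb*ph + cb - 6)"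
      by (simp add: power2_eq_square algebra_simps)
    have "0 \<le> (ph - 1) * (cb*ph + cb - 6)"
    proof (intro mult_nonneg_nonneg)
      have "cb * 1 \<le> cb * ph" by (rule mult_left_mono) (use ph cb3 in auto)
      then show "0 \<le> cb*ph + cb - 6" using cb3 by linarith
    qed (use ph in simp)
    with id e show ?thesis by simp
  qed
  have pb: "1 \<le> phi_bound cb" unfolding phi_bound_def by simp
  have d1: "0 < phi_bound cb^2 + 2*phi_bound cb + cb" using pb cb by (simp add: add_pos_pos)
  have d2: "0 < ph^2 + 2*ph + cb" using ph cb by (simp add: add_pos_pos)
  show ?thesis unfolding f_bound_def using key d1 d2
    by (simp add: divide_le_eq le_divide_eq mult.commute)
qed


lemma ratio_step:
  fixes A W WS G :: real
  assumes "0 < A" "A \<le> W" "0 < WS" "WS \<le> W + G" "0 \<le> G"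
  shows "A/(A+G) \<le> W/WS"
proof -
  have "A*G \<le> W*G" using assms by (simp add: mult_right_mono)
  then have "A*(W+G) \<le> W*(A+G)" by (simp add: algebra_simps)
  then have 1: "A/(A+G) \<le> W/(W+G)" using assms by (simp add: divide_simps)
  have 2: "W/(W+G) \<le> W/WS" using assms by (intro divide_left_mono) auto
  from 1 2 show ?thesis by linarith
qed

lemma final_alg:
  fixes c d xm X S2 :: real
  assumes c: "0 < c" and d: "0 < d" and xm: "0 < xm" and xX: "xm \<le> X" and S2: "xm^2 \<le> S2"
  shows "((X/xm)^2 + 2)/((X/xm)^2 + 2*(X/xm) + c/d) \<le>
    (c*(X^2/2 + S2)) / (c*(X^2/2 + S2) + (c*(xm*X - S2) + c^2*xm^2/(2*d)))"
proof -
  define cb where "cb = c/d"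
  have cb: "0 < cb" using c d by (simp add: cb_def)
  have e1: "c*(X^2/2 + S2) + (c*(xm*X - S2) + c^2*xm^2/(2*d)) = c*(X^2/2 + xm*X + cb*xm^2/2)"
    using d by (simp add: cb_def field_simps power2_eq_square)
  have X0: "0 < X" using xm xX by linarith
  have den: "0 < X^2/2 + xm*X + cb*xm^2/2" using X0 xm cb by (simp add: add_pos_pos)
  have e2: "(c*(X^2/2 + S2)) / (c*(X^2/2 + xm*X + cb*xm^2/2)) = (X^2/2 + S2) / (X^2/2 + xm*X + cb*xm^2/2)"
    using c by simp
  have m: "(X^2/2 + xm^2) / (X^2/2 + xm*X + cb*xm^2/2) \<le> (X^2/2 + S2) / (X^2/2 + xm*X + cb*xm^2/2)"
    using den S2 by (intro divide_right_mono) auto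
  define ph where "ph = X/xm"
  have Xe: "X = ph*xm" using xm by (simp add: ph_def)
  have n: "X^2/2 + xm^2 = (xm^2/2) * (ph^2 + 2)" unfolding Xe by (simp add: algebra_simps power2_eq_square)
  have dd: "X^2/2 + xm*X + cb*xm^2/2 = (xm^2/2) * (ph^2 + 2*ph + cb)" unfolding Xe by (simp add: algebra_simps power2_eq_square)
  have e3: "((X/xm)^2 + 2)/((X/xm)^2 + 2*(X/xm) + cb) = (X^2/2 + xm^2) / (X^2/2 + xm*X + cb*xm^2/2)"
    unfolding n dd using xm by (simp add: ph_def[symmetric])
  show ?thesis using e1 e2 m e3 by (simp add: cb_def)
qed

theorem theorem2:
  fixes N :: nat
    and C :: "nat \<Rightarrow> real \<Rightarrow> real" and dC :: "nat \<Rightarrow> real \<Rightarrow> real"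
    and p :: "real \<Rightarrow> real" and pL :: "real \<Rightarrow> real" and pR :: "real \<Rightarrow> real"
    and x :: "nat \<Rightarrow> real" and xS :: "nat \<Rightarrow> real"
  assumes A1_convex: "\<And>n. n < N \<Longrightarrow> convex_on {0..} (C n)"
    and A1_cont: "\<And>n. n < N \<Longrightarrow> continuous_on {0..} (C n)"
    and A1_mono: "\<And>n. n < N \<Longrightarrow> mono_on {0..} (C n)"
    and A1_deriv: "\<And>n q. n < N \<Longrightarrow> 0 < q \<Longrightarrow> (C n has_real_derivative dC n q) (at q)"
    and A1_deriv_cont: "\<And>n. n < N \<Longrightarrow> continuous_on {0<..} (dC n)"
    and A1_deriv0: "\<And>n. n < N \<Longrightarrow> (C n has_real_derivative dC n 0) (at 0 within {0..})"
    and A1_zero: "\<And>n. n < N \<Longrightarrow> C n 0 = 0"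
    and A2_cont: "continuous_on {0..} p"
    and A2_nonneg: "\<And>q. 0 \<le> q \<Longrightarrow> 0 \<le> p q"
    and A2_antimono: "antimono_on {0..} p"
    and A2_pos: "0 < p 0"
    and A2_right0: "(p has_real_derivative pR 0) (at 0 within {0..})"
    and A2_right: "\<And>q. 0 < q \<Longrightarrow> (p has_real_derivative pR q) (at q within {q..})"
    and A2_left: "\<And>q. 0 < q \<Longrightarrow> (p has_real_derivative pL q) (at q within {..q})"
    and A3: "\<exists>R>0. \<forall>n<N. p R \<le> dC n 0"
    and A4: "\<exists>n<N. dC n 0 < p 0"
    and p_convex: "convex_on {0..} p"
    and cand: "cournot_candidate N dC p pL pR x"
    and opt: "social_optimum N p C xS"
  shows "(p (total N x) = p (total N xS) \<longrightarrow> efficiency N p C xS x = 1) \<and>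
         (p (total N x) \<noteq> p (total N xS) \<longrightarrow>
            (let c = \<bar>deriv p (total N x)\<bar>;
                 d = \<bar>(p (total N xS) - p (total N x)) / (total N xS - total N x)\<bar>;
                 cb = c / d
             in cb \<ge> 1 \<and> 1 > efficiency N p C xS x \<and> efficiency N p C xS x \<ge> f_bound cb))"
proof -
  define X where "X = total N x"
  define XS where "XS = total N xS"
  define P where "P = p X"
  define PS where "PS = p XS"
  define W where "W = welfare N p C x"
  define WS where "WS = welfare N p C xS"
  define IX where "IX = integral {0..X} p"
  define IS where "IS = integral {0..XS} p"
  have xnn: "\<And>n. n < N \<Longrightarrow> 0 \<le> x n" using cand unfolding cournot_candidate_def nonneg_profile_def by auto
  have xSnn: "\<And>n. n < N \<Longrightarrow> 0 \<le> xS n" using opt unfolding social_optimum_def nonneg_profile_def by auto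
  have candL: "\<And>n. n < N \<Longrightarrow> 0 < x n \<Longrightarrow> dC n (x n) \<le> P + x n * pL X"
    using cand unfolding cournot_candidate_def P_def X_def by auto
  have candR: "\<And>n. n < N \<Longrightarrow> P + x n * pR X \<le> dC n (x n)"
    using cand unfolding cournot_candidate_def P_def X_def by auto
  have optle: "\<And>y. nonneg_profile N y \<Longrightarrow> welfare N p C y \<le> WS"
    using opt unfolding social_optimum_def WS_def by auto
  have X0: "0 \<le> X" unfolding X_def total_def using xnn by (auto intro: sum_nonneg)
  have XS0: "0 \<le> XS" unfolding XS_def total_def using xSnn by (auto intro: sum_nonneg)
  have pmono: "\<And>a b. 0 \<le> a \<Longrightarrow> a \<le> b \<Longrightarrow> p b \<le> p a"
    using A2_antimono unfolding monotone_on_def by auto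
  have Cd: "\<And>n v. n < N \<Longrightarrow> 0 \<le> v \<Longrightarrow> (C n has_real_derivative dC n v) (at v within {v..})"
  proof -
    fix n and v :: real assume n: "n < N" and v: "0 \<le> v"
    show "(C n has_real_derivative dC n v) (at v within {v..})"
    proof (cases "v = 0")
      case True then show ?thesis using A1_deriv0[OF n] by simp
    next
      case False then show ?thesis using A1_deriv[OF n, of v] v by (auto intro: has_field_derivative_at_within)
    qed
  qed
  have Ctan: "\<And>n u v. n < N \<Longrightarrow> 0 \<le> u \<Longrightarrow> 0 \<le> v \<Longrightarrow> dC n v * (u - v) \<le> C n u - C n v"
    using tangent_right[OF A1_convex _ _ Cd] by blast
  have dmono: "\<And>n u v. n < N \<Longrightarrow> 0 \<le> v \<Longrightarrow> v \<le> u \<Longrightarrow> dC n v \<le> dC n u"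
  proof -
    fix n and u v :: real assume n: "n < N" and v: "0 \<le> v" and vu: "v \<le> u"
    show "dC n v \<le> dC n u"
    proof (cases "v = u")
      case False
      have 1: "dC n v * (u - v) \<le> C n u - C n v" using Ctan[OF n _ v] v vu by simp
      have 2: "dC n u * (v - u) \<le> C n v - C n u" using Ctan[OF n v, of u] v vu by simp
      have "dC n v * (u - v) \<le> dC n u * (u - v)" using 1 2 by (simp add: algebra_simps)
      then show ?thesis using False vu by (simp add: mult_le_cancel_right)
    qed simp
  qed
  have KKT: "\<And>n. n < N \<Longrightarrow> PS \<le> dC n (xS n)"
  proof (rule ccontr)
    fix n assume n: "n < N" and "\<not> PS \<le> dC n (xS n)"
    then have lt: "dC n (xS n) < p XS" by (simp add: PS_def)
    from perturb[OF A2_cont XS0 xSnn[OF n] Cd[OF n xSnn[OF n]] lt]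
    obtain t where t: "t > 0" "integral {0..XS} p - C n (xS n) < integral {0..XS+t} p - C n (xS n + t)"
      by auto
    have "nonneg_profile N (xS(n := xS n + t))" using xSnn t unfolding nonneg_profile_def by auto
    from optle[OF this] welfare_upd[OF n, of p C xS t] t show False
      by (simp add: WS_def XS_def)
  qed
  have WSpos: "0 < WS"
  proof -
    from A4 obtain n where n: "n < N" and a: "dC n 0 < p 0" by auto
    define z where "z = (\<lambda>k::nat. 0::real)"
    have w0: "welfare N p C z = 0" unfolding welfare_def total_def z_def using A1_zero by simp
    from perturb[OF A2_cont order_refl order_refl Cd[OF n order_refl] a]
    obtain t where t: "t > 0" "integral {0..0} p - C n 0 < integral {0..0+t} p - C n (0 + t)"
      by auto
    have tz: "total N z = 0" unfolding total_def z_def by simp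
    have "nonneg_profile N (z(n := z n + t))" using t unfolding nonneg_profile_def z_def by auto
    from optle[OF this] welfare_upd[OF n, of p C z t] t w0 tz show ?thesis
      by (simp add: z_def)
  qed
  have Xpos: "0 < X"
  proof (rule ccontr)
    assume "\<not> 0 < X"
    then have "X = 0" using X0 by simp
    then have "\<forall>n\<in>{..<N}. x n = 0" unfolding X_def total_def using xnn
      by (subst (asm) sum_nonneg_eq_0_iff) auto
    moreover from A4 obtain n where n: "n < N" and a: "dC n 0 < p 0" by auto
    ultimately show False using candR[OF n] \<open>X = 0\<close> by (simp add: P_def)
  qed
  obtain m0 where m0: "m0 < N" "0 < x m0"
  proof (rule ccontr)
    assume "\<not> thesis"
    then have "\<forall>n<N. x n \<le> 0" using that by force
    then have "X \<le> 0" unfolding X_def total_def by (auto intro: sum_nonpos)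
    with Xpos show False by simp
  qed
  have pRd: "(p has_real_derivative pR X) (at X within {X..})" using A2_right[OF Xpos] .
  have pLd: "(p has_real_derivative pL X) (at X within {..X})" using A2_left[OF Xpos] .
  have tanR: "\<And>u. 0 \<le> u \<Longrightarrow> pR X * (u - X) \<le> p u - P"
    unfolding P_def using tangent_right[OF p_convex X0 _ pRd] by blast
  have tanL: "\<And>u. 0 \<le> u \<Longrightarrow> pL X * (u - X) \<le> p u - P"
    unfolding P_def using tangent_left[OF p_convex Xpos _ pLd] by blast
  have limR: "((\<lambda>y. (p y - P)/(y - X)) \<longlongrightarrow> pR X) (at_right X)"
    using pRd unfolding has_field_derivative_iff P_def
    by (rule tendsto_mono[rotated]) (intro at_le, auto)
  have LleR: "pL X \<le> pR X"
  proof -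
    have "eventually (\<lambda>y. pL X \<le> (p y - P)/(y - X)) (at_right X)"
      using eventually_at_right_real[of X "X+1", OF less_add_one]
    proof eventually_elim
      case (elim y)
      then have "pL X * (y - X) \<le> p y - P" using tanL[of y] X0 by simp
      then show ?case using elim by (simp add: le_divide_eq)
    qed
    from tendsto_lowerbound[OF limR this] show ?thesis by simp
  qed
  have RleL: "pR X \<le> pL X"
  proof -
    have "P + x m0 * pR X \<le> P + x m0 * pL X" using candR[OF m0(1)] candL[OF m0] by linarith
    then show ?thesis using m0(2) by simp
  qed
  define D where "D = pR X"
  have pLD: "pL X = D" using LleR RleL by (simp add: D_def)
  have pd: "(p has_real_derivative D) (at X)"
  proof -
    have "((\<lambda>y. (p y - p X)/(y - X)) \<longlongrightarrow> D) (at X within ({..X} \<union> {X..}))"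
      using pRd pLd pLD unfolding has_field_derivative_iff Lim_within_Un D_def by simp
    moreover have "{..X} \<union> {X..} = (UNIV :: real set)" by auto
    ultimately show ?thesis unfolding has_field_derivative_iff by simp
  qed
  have derivD: "deriv p X = D" using DERIV_imp_deriv[OF pd] .
  have tan: "\<And>u. 0 \<le> u \<Longrightarrow> D * (u - X) \<le> p u - P" using tanR by (simp add: D_def)
  have Dle0: "D \<le> 0"
  proof -
    have "D * (X + 1 - X) \<le> p (X+1) - P" using tan[of "X+1"] X0 by simp
    moreover have "p (X+1) \<le> P" using pmono[OF X0, of "X+1"] by (simp add: P_def)
    ultimately show ?thesis by simp
  qed
  have alge: "\<And>n. n < N \<Longrightarrow> P + D * x n \<le> dC n (x n)"
    using candR by (simp add: D_def mult.commute)
  have aleq: "\<And>n. n < N \<Longrightarrow> 0 < x n \<Longrightarrow> dC n (x n) = P + D * x n"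
    using candR candL pLD by (simp add: D_def mult.commute order_antisym)
  define S2 where "S2 = (\<Sum>n<N. (x n)^2)"
  define SX where "SX = (\<Sum>n<N. x n * xS n)"
  have F7: "P*(XS - X) + D*(SX - S2) \<le> (\<Sum>n<N. C n (xS n)) - (\<Sum>n<N. C n (x n))"
  proof -
    have each: "(P + D * x n) * (xS n - x n) \<le> C n (xS n) - C n (x n)" if n: "n < N" for n
    proof -
      have 1: "dC n (x n) * (xS n - x n) \<le> C n (xS n) - C n (x n)"
        using Ctan[OF n xSnn[OF n] xnn[OF n]] .
      have 2: "(P + D * x n) * (xS n - x n) \<le> dC n (x n) * (xS n - x n)"
      proof (cases "0 < x n")
        case True then show ?thesis using aleq[OF n] by simp
      next
        case False
        then have "x n = 0" using xnn[OF n] by simp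
        then show ?thesis using alge[OF n] xSnn[OF n] by (simp add: mult_right_mono)
      qed
      from 1 2 show ?thesis by linarith
    qed
    have "(\<Sum>n<N. (P + D * x n) * (xS n - x n)) = (\<Sum>n<N. P * xS n - P * x n + (D * (x n * xS n) - D * (x n)^2))"
      by (rule sum.cong) (auto simp: algebra_simps power2_eq_square)
    also have "\<dots> = P*(XS - X) + D*(SX - S2)"
      by (simp add: sum.distrib sum_subtractf sum_distrib_left X_def XS_def total_def SX_def S2_def algebra_simps)
    finally have "P*(XS - X) + D*(SX - S2) = (\<Sum>n<N. (P + D * x n) * (xS n - x n))" by simp
    also have "\<dots> \<le> (\<Sum>n<N. C n (xS n) - C n (x n))" by (rule sum_mono) (use each in auto)
    finally show ?thesis by (simp add: sum_subtractf)
  qed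
  have F8: "(\<Sum>n<N. C n (x n)) \<le> P*X + D*S2"
  proof -
    have each: "C n (x n) \<le> P * x n + D * (x n)^2" if n: "n < N" for n
    proof (cases "0 < x n")
      case True
      have "dC n (x n) * (0 - x n) \<le> C n 0 - C n (x n)" using Ctan[OF n order_refl xnn[OF n]] .
      then show ?thesis using aleq[OF n True] A1_zero[OF n] by (simp add: algebra_simps power2_eq_square)
    next
      case False
      then have "x n = 0" using xnn[OF n] by simp
      then show ?thesis using A1_zero[OF n] by simp
    qed
    have "(\<Sum>n<N. C n (x n)) \<le> (\<Sum>n<N. P * x n + D * (x n)^2)" by (rule sum_mono) (use each in auto)
    also have "\<dots> = P*X + D*S2" by (simp add: sum.distrib sum_distrib_left X_def total_def S2_def)
    finally show ?thesis .
  qed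
  have pint: "\<And>a b. 0 \<le> a \<Longrightarrow> p integrable_on {a..b}"
    by (rule integrable_continuous_interval, rule continuous_on_subset[OF A2_cont]) auto
  have F9: "P*X - D*X^2/2 \<le> IX"
  proof -
    have "integral {0..X} (\<lambda>q. (P - D*X) + D * q) \<le> integral {0..X} p"
    proof (rule integral_le)
      show "(\<lambda>q. (P - D*X) + D * q) integrable_on {0..X}"
        by (rule integrable_continuous_interval) (auto intro!: continuous_intros)
      show "p integrable_on {0..X}" using pint by simp
      show "(P - D*X) + D * q \<le> p q" if "q \<in> {0..X}" for q
        using tan[of q] that by (simp add: algebra_simps)
    qed
    moreover have "integral {0..X} (\<lambda>q. (P - D*X) + D * q) = (P - D*X)*(X - 0) + D*(X^2 - 0^2)/2"
      by (rule lin_integral[OF X0])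
    moreover have "(P - D*X)*(X - 0) + D*(X^2 - 0^2)/2 = P*X - D*X^2/2"
      by (simp add: algebra_simps power2_eq_square)
    ultimately show ?thesis by (simp add: IX_def)
  qed
  have Wlow: "-D*(X^2/2 + S2) \<le> W"
    using F8 F9 unfolding W_def welfare_def X_def[symmetric] IX_def[symmetric] by (simp add: algebra_simps)
  have Gup: "WS - W \<le> (IS - IX) - P*(XS - X) - D*(SX - S2)"
    using F7 unfolding W_def WS_def welfare_def X_def[symmetric] XS_def[symmetric] IX_def[symmetric] IS_def[symmetric]
    by (simp add: algebra_simps)
  have WleWS: "W \<le> WS" using optle[of x] cand unfolding cournot_candidate_def W_def by simp
  have xlt: "\<exists>n<N. xS n < x n" if "XS < X"
  proof (rule ccontr)
    assume "\<not> (\<exists>n<N. xS n < x n)"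
    then have "\<And>n. n < N \<Longrightarrow> x n \<le> xS n" by (meson not_less)
    then have "X \<le> XS" unfolding X_def XS_def total_def by (auto intro!: sum_mono)
    with that show False by simp
  qed
  have effe: "efficiency N p C xS x = W / WS" by (simp add: efficiency_def W_def WS_def)
  show ?thesis
  proof (intro conjI impI)
    assume a: "p (total N x) = p (total N xS)"
    then have PPS: "P = PS" by (simp add: P_def PS_def X_def XS_def)
    have D0: "D = 0"
    proof -
      consider "X < XS" | "XS < X" | "XS = X" by linarith
      then show ?thesis
      proof cases
        case 1
        have ev: "eventually (\<lambda>y. (p y - P)/(y - X) = 0) (at_right X)"
          using eventually_at_right_real[OF 1]
        proof eventually_elim
          case (elim y)
          have "p y \<le> P" using pmono[OF X0, of y] elim by (simp add: P_def)
          moreover have "PS \<le> p y" using pmono[of y XS] elim X0 by (simp add: PS_def)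
          ultimately show ?case using PPS by simp
        qed
        have "pR X \<le> 0" by (rule tendsto_upperbound[OF limR]) (use ev in \<open>auto elim: eventually_mono\<close>)
        moreover have "0 \<le> pR X" by (rule tendsto_lowerbound[OF limR]) (use ev in \<open>auto elim: eventually_mono\<close>)
        ultimately show ?thesis by (simp add: D_def)
      next
        case 2
        then obtain n where n: "n < N" "xS n < x n" using xlt by blast
        then have xp: "0 < x n" using xSnn[OF n(1)] by linarith
        have "PS \<le> dC n (x n)" using KKT[OF n(1)] dmono[OF n(1) xSnn[OF n(1)], of "x n"] n by linarith
        then have "0 \<le> D * x n" using aleq[OF n(1) xp] PPS by simp
        then have "0 \<le> D" using xp by (simp add: zero_le_mult_iff)
        with Dle0 show ?thesis by simp
      next
        case 3
        show ?thesis
        proof (rule ccontr)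
          assume "D \<noteq> 0"
          then have Dn: "D < 0" using Dle0 by simp
          have lt: "x n < xS n" if n: "n < N" "0 < x n" for n
          proof (rule ccontr)
            assume "\<not> x n < xS n"
            then have "dC n (xS n) \<le> dC n (x n)" using dmono[OF n(1) xSnn[OF n(1)]] by simp
            moreover have "D * x n < 0" using Dn n(2) by (simp add: mult_neg_pos)
            ultimately show False using KKT[OF n(1)] aleq[OF n] PPS by simp
          qed
          have le: "x n \<le> xS n" if n: "n < N" for n
          proof (cases "0 < x n")
            case True then show ?thesis using lt[OF n] by simp
          next
            case False then show ?thesis using xnn[OF n] xSnn[OF n] by simp
          qed
          have "X < XS" unfolding X_def XS_def total_def
            by (rule sum_strict_mono_ex1) (use le lt m0 in auto)
          with 3 show False by simp
        qed
      qed
    qed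
    have Iint: "IS - IX = P*(XS - X)"
    proof (cases "X \<le> XS")
      case True
      have c: "IX + integral {X..XS} p = IS" unfolding IX_def IS_def
        by (rule Henstock_Kurzweil_Integration.integral_combine[OF X0 True pint[OF order_refl]])
      have "integral {X..XS} p = integral {X..XS} (\<lambda>q. P + 0 * q)"
      proof (rule integral_cong)
        fix q assume q: "q \<in> {X..XS}"
        have "p q \<le> P" using pmono[OF X0, of q] q by (simp add: P_def)
        moreover have "PS \<le> p q" using pmono[of q XS] q X0 by (simp add: PS_def)
        ultimately show "p q = P + 0 * q" using PPS by simp
      qed
      also have "\<dots> = P * (XS - X) + 0 * (XS^2 - X^2)/2" by (rule lin_integral[OF True])
      finally show ?thesis using c by simp
    next
      case False
      then have F: "XS \<le> X" by simp
      have c: "IS + integral {XS..X} p = IX" unfolding IX_def IS_def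
        by (rule Henstock_Kurzweil_Integration.integral_combine[OF XS0 F pint[OF order_refl]])
      have "integral {XS..X} p = integral {XS..X} (\<lambda>q. P + 0 * q)"
      proof (rule integral_cong)
        fix q assume q: "q \<in> {XS..X}"
        have "p q \<le> PS" using pmono[OF XS0, of q] q by (simp add: PS_def)
        moreover have "P \<le> p q" using pmono[of q X] q XS0 by (simp add: P_def)
        ultimately show "p q = P + 0 * q" using PPS by simp
      qed
      also have "\<dots> = P * (X - XS) + 0 * (X^2 - XS^2)/2" by (rule lin_integral[OF F])
      finally show ?thesis using c by (simp add: algebra_simps)
    qed
    have "WS \<le> W" using Gup Iint D0 by simp
    with WleWS have "W = WS" by simp
    then show "efficiency N p C xS x = 1" using effe WSpos by simp
  next
    assume b: "p (total N x) \<noteq> p (total N xS)"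
    then have PnPS: "P \<noteq> PS" by (simp add: P_def PS_def X_def XS_def)
    have XlXS: "X < XS"
    proof (rule ccontr)
      assume "\<not> X < XS"
      then consider "XS = X" | "XS < X" by linarith
      then show False
      proof cases
        case 1 then show False using PnPS by (simp add: P_def PS_def)
      next
        case 2
        then obtain n where n: "n < N" "xS n < x n" using xlt by blast
        then have xp: "0 < x n" using xSnn[OF n(1)] by linarith
        have "PS \<le> dC n (x n)" using KKT[OF n(1)] dmono[OF n(1) xSnn[OF n(1)], of "x n"] n by linarith
        then have "PS \<le> P + D * x n" using aleq[OF n(1) xp] by simp
        moreover have "D * x n \<le> 0" using Dle0 xp by (simp add: mult_nonpos_nonneg)
        moreover have "P \<le> PS" using pmono[OF XS0, of X] 2 by (simp add: P_def PS_def)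
        ultimately show False using PnPS by simp
      qed
    qed
    have PSltP: "PS < P" using pmono[OF X0, of XS] XlXS PnPS by (simp add: P_def PS_def)
    define \<Delta> where "\<Delta> = XS - X"
    define d where "d = (P - PS) / \<Delta>"
    define c where "c = - D"
    have Dpos: "0 < \<Delta>" using XlXS by (simp add: \<Delta>_def)
    have dpos: "0 < d" using Dpos PSltP by (simp add: d_def)
    have dD: "P - PS = d * \<Delta>" using Dpos by (simp add: d_def)
    have cged: "d \<le> c"
    proof -
      have "D * (XS - X) \<le> PS - P" using tan[OF XS0] by (simp add: PS_def)
      then have "d * \<Delta> \<le> c * \<Delta>" using dD by (simp add: c_def \<Delta>_def)
      then show ?thesis using Dpos by simp
    qed
    have cpos: "0 < c" using cged dpos by simp
    have Ichord: "IS - IX \<le> \<Delta> * (P + PS) / 2"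
    proof -
      have c0: "IX + integral {X..XS} p = IS" unfolding IX_def IS_def
        by (rule Henstock_Kurzweil_Integration.integral_combine[OF X0 _ pint[OF order_refl]]) (use XlXS in simp)
      define sl where "sl = (PS - P) / \<Delta>"
      have slD: "sl * \<Delta> = PS - P" using Dpos by (simp add: sl_def)
      have cvx: "convex_on {X..XS} p" by (rule convex_on_subset[OF p_convex]) (use X0 in auto)
      have "integral {X..XS} p \<le> integral {X..XS} (\<lambda>q. (P - sl*X) + sl * q)"
      proof (rule integral_le)
        show "p integrable_on {X..XS}" using pint X0 by simp
        show "(\<lambda>q. (P - sl*X) + sl * q) integrable_on {X..XS}"
          by (rule integrable_continuous_interval) (auto intro!: continuous_intros)
        show "p q \<le> (P - sl*X) + sl * q" if q: "q \<in> {X..XS}" for q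
        proof -
          have "p q \<le> sl * (q - X) + P" using convex_onD_Icc'[OF cvx q] by (simp add: sl_def \<Delta>_def P_def PS_def)
          then show ?thesis by (simp add: algebra_simps)
        qed
      qed
      also have "\<dots> = (P - sl*X) * (XS - X) + sl * (XS^2 - X^2) / 2"
        by (rule lin_integral) (use XlXS in simp)
      also have "\<dots> = \<Delta> * P + (sl * \<Delta>) * \<Delta> / 2"
        by (simp add: \<Delta>_def field_simps power2_eq_square)
      also have "\<dots> = \<Delta> * (P + PS) / 2" unfolding slD by (simp add: field_simps)
      finally show ?thesis using c0 by simp
    qed
    have G1: "WS - W \<le> - d * \<Delta>^2 / 2 + c * (SX - S2)"
    proof -
      have "IS - IX - P*(XS - X) \<le> - d * \<Delta>^2 / 2"
      proof -
        have "IS - IX - P*(XS - X) \<le> \<Delta> * (P + PS) / 2 - P * \<Delta>" using Ichord by (simp add: \<Delta>_def)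
        also have "\<dots> = - (P - PS) * \<Delta> / 2" by (simp add: algebra_simps)
        also have "\<dots> = - d * \<Delta>^2 / 2" unfolding dD by (simp add: power2_eq_square)
        finally show ?thesis .
      qed
      then show ?thesis using Gup by (simp add: c_def)
    qed
    define xm where "xm = Max (x ` {..<N})"
    have finx: "finite (x ` {..<N})" "x ` {..<N} \<noteq> {}" using m0 by auto
    have xm_ge: "\<And>n. n < N \<Longrightarrow> x n \<le> xm" unfolding xm_def using finx by (auto intro: Max_ge)
    obtain k where k: "k < N" "xm = x k" using Max_in[OF finx] unfolding xm_def by auto
    have xmpos: "0 < xm" using xm_ge[OF m0(1)] m0(2) by simp
    have SXle: "SX \<le> xm * XS"
    proof -
      have "SX \<le> (\<Sum>n<N. xm * xS n)" unfolding SX_def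
        by (rule sum_mono) (use xm_ge xSnn in \<open>auto intro: mult_right_mono\<close>)
      also have "\<dots> = xm * XS" by (simp add: XS_def total_def sum_distrib_left)
      finally show ?thesis .
    qed
    have S2ge: "xm^2 \<le> S2" unfolding S2_def k(2)
      by (rule member_le_sum) (use k in auto)
    have xmleX: "xm \<le> X" unfolding X_def total_def k(2)
      by (rule member_le_sum) (use k xnn in auto)
    define G where "G = c*(xm*X - S2) + c^2*xm^2/(2*d)"
    have Gb: "WS - W \<le> G"
    proof -
      have am: "c*xm*\<Delta> - d*\<Delta>^2/2 \<le> c^2*xm^2/(2*d)"
      proof -
        have "0 \<le> (c*xm - d*\<Delta>)^2" by simp
        then have "2*d*(c*xm*\<Delta> - d*\<Delta>^2/2) \<le> c^2*xm^2"
          by (simp add: power2_eq_square algebra_simps)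
        then show ?thesis using dpos by (simp add: le_divide_eq mult.commute)
      qed
      have "c * SX \<le> c * (xm * XS)" using SXle cpos by simp
      then have "WS - W \<le> - d * \<Delta>^2 / 2 + c * (xm * XS - S2)" using G1 by (simp add: algebra_simps)
      also have "\<dots> = (c*xm*\<Delta> - d*\<Delta>^2/2) + c*(xm*X - S2)" by (simp add: \<Delta>_def algebra_simps)
      finally show ?thesis using am unfolding G_def by simp
    qed
    define Aa where "Aa = c*(X^2/2 + S2)"
    have "0 < X^2/2" using Xpos by simp
    moreover have "0 \<le> S2" using S2ge by (meson order_trans zero_le_power2)
    ultimately have h: "0 < X^2/2 + S2" by linarith
    have Apos: "0 < Aa" unfolding Aa_def using cpos h by (rule mult_pos_pos)
    have AleW: "Aa \<le> W" using Wlow by (simp add: Aa_def c_def)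
    have WltWS: "W < WS"
    proof -
      have lt: "dC m0 (x m0) < p X"
        using aleq[OF m0] cpos m0(2) by (simp add: c_def P_def mult_neg_pos)
      from perturb[OF A2_cont X0 xnn[OF m0(1)] Cd[OF m0(1) xnn[OF m0(1)]] lt]
      obtain t where t: "t > 0" "integral {0..X} p - C m0 (x m0) < integral {0..X+t} p - C m0 (x m0 + t)"
        by auto
      have "nonneg_profile N (x(m0 := x m0 + t))" using xnn t unfolding nonneg_profile_def by auto
      from optle[OF this] welfare_upd[OF m0(1), of p C x t] t show ?thesis
        by (simp add: W_def X_def)
    qed
    have Gnn: "0 \<le> G" using Gb WltWS by simp
    have r1: "Aa/(Aa+G) \<le> W/WS" by (rule ratio_step[OF Apos AleW WSpos _ Gnn]) (use Gb in simp)
    have r2: "((X/xm)^2 + 2)/((X/xm)^2 + 2*(X/xm) + c/d) \<le> Aa/(Aa+G)"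
      unfolding Aa_def G_def by (rule final_alg[OF cpos dpos xmpos xmleX S2ge])
    have cb1: "1 \<le> c/d" using cged dpos by simp
    have ph1: "1 \<le> X/xm" using xmleX xmpos by simp
    have r3: "f_bound (c/d) \<le> ((X/xm)^2 + 2)/((X/xm)^2 + 2*(X/xm) + c/d)" by (rule fb[OF cb1 ph1])
    have ec: "\<bar>deriv p (total N x)\<bar> = c" using derivD Dle0 by (simp add: X_def[symmetric] c_def)
    have ed: "\<bar>(p (total N xS) - p (total N x)) / (total N xS - total N x)\<bar> = d"
    proof -
      have "(p (total N xS) - p (total N x)) / (total N xS - total N x) = - d"
        by (simp add: X_def[symmetric] XS_def[symmetric] P_def[symmetric] PS_def[symmetric] d_def \<Delta>_def minus_divide_left)
      then show ?thesis using dpos by simp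
    qed
    show "let c = \<bar>deriv p (total N x)\<bar>;
                 d = \<bar>(p (total N xS) - p (total N x)) / (total N xS - total N x)\<bar>;
                 cb = c / d
             in cb \<ge> 1 \<and> 1 > efficiency N p C xS x \<and> efficiency N p C xS x \<ge> f_bound cb"
      unfolding Let_def ec ed effe using cb1 WltWS WSpos r1 r2 r3 by simp
  qed
qed
end
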